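(* For every $\epsilon\in(-\tfrac12,\tfrac12)$ and all partitions $p,p'$ of $n$, if $p'\le p$ in the dominance order then $|v_\epsilon(p)|\le|v_\epsilon(p')|$, where $|\cdot|$ is the Euclidean norm on $\mathbb R^n$.
   Context: For a partition $p=[p_1,p_2,p_3,\dots]$ of $n$ ($p_1\ge p_2\ge\cdots$), dominance order: $p'\le p$ iff $\sum_{i\le j}p'_i\le\sum_{i\le j}p_i$ for all $j$. For $\epsilon\in(-\frac12,\frac12)$ define $v_\epsilon(p)\in(\epsilon+\mathbb Z)^n$ as the weakly decreasing rearrangement of the $n$-tuple containing, when $\epsilon\ge0$: $\epsilon$ with multiplicity $p_1$, $\epsilon-1$ with multiplicity $p_2$, $\epsilon+1$ with multiplicity $p_3$, $\epsilon-2$ with multiplicity $p_4$, $\epsilon+2$ with multiplicity $p_5$, and so on; when $\epsilon<0$: $\epsilon$ with multiplicity $p_1$, $\epsilon+1$ with multiplicity $p_2$, $\epsilon-1$ with multiplicity $p_3$, $\epsilon+2$ with multiplicity $p_4$, $\epsilon-2$ with multiplicity $p_5$, and so on. *)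

theory Defs
  imports Complex_Main
begin

definition is_partition :: "nat \<Rightarrow> nat list \<Rightarrow> bool" where
  "is_partition n p \<longleftrightarrow> sorted_wrt (\<ge>) p \<and> (\<forall>x\<in>set p. 0 < x) \<and> sum_list p = n"

text \<open>Dominance order: p' \<le> p iff all partial sums of p' are bounded by those of p
  (parts beyond the length are 0, which take handles).\<close>
definition dominated :: "nat list \<Rightarrow> nat list \<Rightarrow> bool" where
  "dominated p' p \<longleftrightarrow> (\<forall>j. sum_list (take j p') \<le> sum_list (take j p))"

definition offset :: "real \<Rightarrow> nat \<Rightarrow> int" where
  "offset eps i = (let d = (if even i then int (i div 2) else - int ((i + 1) div 2))
                   in if eps \<ge> 0 then d else - d)"

definition v_eps :: "real \<Rightarrow> nat list \<Rightarrow> real list" where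
  "v_eps eps p = rev (sort (concat (map (\<lambda>i. replicate (p ! i) (eps + of_int (offset eps i)))
                                       [0..<length p])))"

definition eucl_norm :: "real list \<Rightarrow> real" where
  "eucl_norm v = sqrt (sum_list (map (\<lambda>x. x\<^sup>2) v))"

end

theory Submission
  imports Defs "HOL-Library.Multiset"
begin

lemma cr: "sum_list (map (h::'a\<Rightarrow>real) (concat (map (\<lambda>i. replicate (k i) (a i)) xs))) = sum_list (map (\<lambda>i. real (k i) * h (a i)) xs)"
  by (induction xs) (simp_all add: sum_list_replicate)

lemma upt_sum: "sum_list (map (f::nat\<Rightarrow>real) [0..<n]) = (\<Sum>i<n. f i)"
  by (induction n) simp_all

lemma msum: "mset xs = mset ys \<Longrightarrow> sum_list (map (\<lambda>x::real. x\<^sup>2) xs) = sum_list (map (\<lambda>x. x\<^sup>2) ys)"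
  by (metis mset_map sum_mset_sum_list)

lemma sq_sum_v:
  "sum_list (map (\<lambda>x. x\<^sup>2) (v_eps eps p)) =
   (\<Sum>i<length p. real (p ! i) * (eps + of_int (offset eps i))\<^sup>2)"
proof -
  let ?xs = "concat (map (\<lambda>i. replicate (p ! i) (eps + of_int (offset eps i))) [0..<length p])"
  have "sum_list (map (\<lambda>x. x\<^sup>2) (v_eps eps p)) = sum_list (map (\<lambda>x. x\<^sup>2) ?xs)"
  proof -
    have "mset (v_eps eps p) = mset ?xs" unfolding v_eps_def by (simp only: mset_rev mset_sort)
    then show ?thesis by (rule msum)
  qed
  also have "\<dots> = (\<Sum>i\<leftarrow>[0..<length p]. real (p ! i) * (eps + of_int (offset eps i))\<^sup>2)"
    by (rule cr)
  also have "\<dots> = (\<Sum>i<length p. real (p ! i) * (eps + of_int (offset eps i))\<^sup>2)"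
    by (rule upt_sum)
  finally show ?thesis .
qed

definition ext :: "nat list \<Rightarrow> nat \<Rightarrow> nat" where
  "ext p i = (if i < length p then p ! i else 0)"

lemma take_sum: "sum_list (take j p) = (\<Sum>i<j. ext p i)"
proof (induction j)
  case 0 then show ?case by simp
next
  case (Suc j)
  show ?case
  proof (cases "j < length p")
    case True
    then have "take (Suc j) p = take j p @ [p ! j]" by (simp add: take_Suc_conv_app_nth)
    then show ?thesis using Suc True by (simp add: ext_def)
  next
    case False
    then show ?thesis using Suc by (simp add: ext_def)
  qed
qed

lemma ext_sum:
  assumes "length p \<le> L"
  shows "(\<Sum>i<L. real (ext p i) * c i) = (\<Sum>i<length p. real (p ! i) * c i)"
proof -
  have "(\<Sum>i<L. real (ext p i) * c i) = (\<Sum>i<length p. real (ext p i) * c i)"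
    by (rule sum.mono_neutral_right) (use assms in \<open>auto simp: ext_def\<close>)
  also have "\<dots> = (\<Sum>i<length p. real (p ! i) * c i)"
    by (rule sum.cong) (auto simp: ext_def)
  finally show ?thesis .
qed

lemma abel:
  "(\<Sum>i<L. real (f i) * c i) = real (\<Sum>i<L. f i) * c L
     - (\<Sum>j<L. real (\<Sum>i<Suc j. f i) * (c (Suc j) - c j))"
  by (induction L) (auto simp: algebra_simps)

lemma abel_ineq:
  fixes f g :: "nat \<Rightarrow> nat" and c :: "nat \<Rightarrow> real"
  assumes "\<And>j. (\<Sum>i<j. g i) \<le> (\<Sum>i<j. f i)"
    and "(\<Sum>i<L. g i) = (\<Sum>i<L. f i)"
    and "\<And>j. c j \<le> c (Suc j)"
  shows "(\<Sum>i<L. real (f i) * c i) \<le> (\<Sum>i<L. real (g i) * c i)"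
proof -
  have "(\<Sum>j<L. real (\<Sum>i<Suc j. g i) * (c (Suc j) - c j))
        \<le> (\<Sum>j<L. real (\<Sum>i<Suc j. f i) * (c (Suc j) - c j))"
    apply (rule sum_mono)
    apply (rule mult_right_mono)
    subgoal for j using assms(1)[of "Suc j"] by (simp only: of_nat_le_iff)
    using assms(3) by simp
  moreover have "real (\<Sum>i<L. g i) * c L = real (\<Sum>i<L. f i) * c L" using assms(2) by simp
  ultimately show ?thesis using abel[of f c L] abel[of g c L] by linarith
qed

lemma c_mono:
  assumes "- (1/2) < eps" "eps < 1/2"
  shows "(eps + real_of_int (offset eps j))\<^sup>2 \<le> (eps + real_of_int (offset eps (Suc j)))\<^sup>2"
proof (cases "even j")
  case True
  then obtain k where k: "j = 2 * k" by auto
  have o1: "offset eps j = (if eps \<ge> 0 then int k else - int k)"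
    using k by (simp add: offset_def)
  have o2: "offset eps (Suc j) = (if eps \<ge> 0 then - int k - 1 else int k + 1)"
    using k by (simp add: offset_def)
  show ?thesis using assms unfolding o1 o2
    apply (simp only: abs_le_square_iff[symmetric])
    by (cases "eps \<ge> 0") (simp_all add: abs_if)
next
  case False
  then obtain k where k: "j = 2 * k + 1" using oddE by blast
  have o1: "offset eps j = (if eps \<ge> 0 then - int k - 1 else int k + 1)"
    using k by (simp add: offset_def)
  have o2: "offset eps (Suc j) = (if eps \<ge> 0 then int k + 1 else - int k - 1)"
    using k by (simp add: offset_def)
  show ?thesis using assms unfolding o1 o2
    apply (simp only: abs_le_square_iff[symmetric])
    by (cases "eps \<ge> 0") (simp_all add: abs_if)
qed

theorem lemmaA6:
  fixes eps :: real and n :: nat and p p' :: "nat list"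
  assumes "- (1/2) < eps" and "eps < 1/2"
    and "is_partition n p" and "is_partition n p'"
    and "dominated p' p"
  shows "eucl_norm (v_eps eps p) \<le> eucl_norm (v_eps eps p')"
proof -
  define c where "c i = (eps + real_of_int (offset eps i))\<^sup>2" for i
  define L where "L = length p + length p'"
  have dom: "\<And>j. (\<Sum>i<j. ext p' i) \<le> (\<Sum>i<j. ext p i)"
    using assms(5) unfolding dominated_def take_sum by blast
  have eq: "(\<Sum>i<L. ext p' i) = (\<Sum>i<L. ext p i)"
    using assms(3,4) unfolding L_def is_partition_def take_sum[symmetric] by simp
  have "(\<Sum>i<L. real (ext p i) * c i) \<le> (\<Sum>i<L. real (ext p' i) * c i)"
    by (rule abel_ineq[OF dom eq]) (use c_mono[OF assms(1,2)] in \<open>simp add: c_def\<close>)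
  then have "sum_list (map (\<lambda>x. x\<^sup>2) (v_eps eps p)) \<le> sum_list (map (\<lambda>x. x\<^sup>2) (v_eps eps p'))"
    unfolding sq_sum_v using ext_sum[of p L c] ext_sum[of p' L c]
    by (simp add: L_def c_def)
  then show ?thesis unfolding eucl_norm_def by simp
qed

end
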